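(* With $H,\boldsymbol{P}^h,\boldsymbol{A}^h,\boldsymbol{W}_V^h,\boldsymbol{W}_O^h,\alpha,\sigma_1,\sigma_2$ and $\mathrm{MSA}$ as follows — $\boldsymbol{A}^h=\mathrm{softmax}(\boldsymbol{P}^h)$ for $h=1,\dots,H$, $\alpha=\max_h\max_{i,j}\lvert\boldsymbol{P}^h_{ij}\rvert$, $\sigma_1=\max_h\lVert\boldsymbol{W}_V^h\rVert_2$, $\sigma_2=\max_h\lVert\boldsymbol{W}_O^h\rVert_2$, $\mathrm{MSA}(\boldsymbol{X})=\sum_{h=1}^H\boldsymbol{A}^h\boldsymbol{X}\boldsymbol{W}_V^h\boldsymbol{W}_O^h$ — let $\boldsymbol{X}\in\mathbb{R}^{n\times d}$ and $\boldsymbol{X}'=\mathrm{MSA}(\boldsymbol{X})+\boldsymbol{X}$. Then $$\lVert\mathrm{HC}[\boldsymbol{X}']\rVert_F\le\Big(1+\sigma_1\sigma_2H\sqrt{\tfrac{ne^{2\alpha}}{e^{2\alpha}+n-1}}\Big)\lVert\mathrm{HC}[\boldsymbol{X}]\rVert_F.$$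
   Context: $\boldsymbol{P}^h\in\mathbb{R}^{n\times n}$, $\boldsymbol{W}_V^h,\boldsymbol{W}_O^h\in\mathbb{R}^{d\times d}$. $\mathrm{softmax}$ is applied row-wise: $\mathrm{softmax}(\boldsymbol{P})_{ij}=e^{\boldsymbol{P}_{ij}}/\sum_t e^{\boldsymbol{P}_{it}}$. $\mathrm{HC}[\boldsymbol{X}]=(\boldsymbol{I}-\frac1n\boldsymbol{1}\boldsymbol{1}^T)\boldsymbol{X}$ with $\boldsymbol{1}$ the all-ones vector. $\lVert\cdot\rVert_F$ Frobenius norm, $\lVert\cdot\rVert_2$ spectral norm. *)

theory Defs
  imports "HOL-Analysis.Analysis"
begin

definition softmax :: "real^'n^'m \<Rightarrow> real^'n^'m" where
  "softmax P = (\<chi> i j. exp (P $ i $ j) / (\<Sum>t\<in>UNIV. exp (P $ i $ t)))"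

definition frob_norm :: "real^'c^'r \<Rightarrow> real" where
  "frob_norm X = sqrt (\<Sum>i\<in>UNIV. \<Sum>j\<in>UNIV. (X $ i $ j)^2)"

definition spec_norm :: "real^'c^'r \<Rightarrow> real" where
  "spec_norm W = onorm (\<lambda>x. W *v x)"

definition HC :: "real^'d^'n \<Rightarrow> real^'d^'n" where
  "HC X = (mat 1 - (\<chi> i j. 1 / real CARD('n))) ** X"

definition MSA :: "nat \<Rightarrow> (nat \<Rightarrow> real^'n^'n) \<Rightarrow> (nat \<Rightarrow> real^'d^'d) \<Rightarrow> (nat \<Rightarrow> real^'d^'d)
    \<Rightarrow> real^'d^'n \<Rightarrow> real^'d^'n" where
  "MSA H P WV WO X = (\<Sum>h<H. softmax (P h) ** X ** WV h ** WO h)"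

end

theory Submission
  imports Defs
begin


lemma norm_sq_rows: "(norm (X::real^'c^'r))^2 = (\<Sum>i\<in>UNIV. (norm (X$i))^2)"
  by (simp add: norm_vec_def L2_set_def sum_nonneg)

lemma norm_sq_vec: "(norm (x::real^'c))^2 = (\<Sum>j\<in>UNIV. (x$j)^2)"
  by (simp add: norm_vec_def L2_set_def sum_nonneg)

lemma frob_eq: "frob_norm (X::real^'c^'r) = norm X"
proof -
  have "norm X = sqrt ((norm X)^2)" by simp
  also have "\<dots> = frob_norm X" unfolding frob_norm_def norm_sq_rows norm_sq_vec ..
  finally show ?thesis by simp
qed

lemma HC_entry: "HC (Z::real^'d^'n) $ i $ j = Z$i$j - (\<Sum>k\<in>UNIV. Z$k$j) / real CARD('n)"
proof -
  have "HC Z $ i $ j = (\<Sum>k\<in>UNIV. ((if i = k then 1 else 0) - 1 / real CARD('n)) * Z$k$j)"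
    by (simp add: HC_def matrix_matrix_mult_def mat_def)
  also have "\<dots> = (\<Sum>k\<in>UNIV. (if i = k then Z$k$j else 0)) - (\<Sum>k\<in>UNIV. Z$k$j / real CARD('n))"
  proof -
    have "(\<Sum>k\<in>UNIV. ((if i = k then 1 else 0) - 1 / real CARD('n)) * Z$k$j)
      = (\<Sum>k\<in>UNIV. (if i = k then Z$k$j else 0) - Z$k$j / real CARD('n))"
      by (rule sum.cong) (auto simp: algebra_simps)
    then show ?thesis by (simp add: sum_subtractf)
  qed
  also have "\<dots> = Z$i$j - (\<Sum>k\<in>UNIV. Z$k$j) / real CARD('n)"
    by (simp add: sum_divide_distrib)
  finally show ?thesis .
qed

lemma var_id:
  fixes a y :: "'a \<Rightarrow> real"
  assumes "finite S" "sum a S = 1"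
  shows "(\<Sum>k\<in>S. a k * (y k - (\<Sum>l\<in>S. a l * y l))^2) = (\<Sum>k\<in>S. a k * (y k)^2) - (\<Sum>l\<in>S. a l * y l)^2"
proof -
  define m where "m = (\<Sum>l\<in>S. a l * y l)"
  have "(\<Sum>k\<in>S. a k * (y k - m)^2) = (\<Sum>k\<in>S. a k * (y k)^2 - 2 * m * (a k * y k) + m^2 * a k)"
    by (rule sum.cong) (auto simp: power2_eq_square algebra_simps)
  also have "\<dots> = (\<Sum>k\<in>S. a k * (y k)^2) - 2 * m * m + m^2 * sum a S"
    by (simp add: sum.distrib sum_subtractf sum_distrib_left m_def)
  also have "\<dots> = (\<Sum>k\<in>S. a k * (y k)^2) - m^2" using assms by (simp add: power2_eq_square)
  finally show ?thesis by (simp add: m_def)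
qed

lemma cs_weighted:
  fixes a y :: "'a \<Rightarrow> real"
  assumes "finite S" "sum a S = 1" "\<And>k. k \<in> S \<Longrightarrow> a k \<ge> 0"
  shows "(\<Sum>l\<in>S. a l * y l)^2 \<le> (\<Sum>k\<in>S. a k * (y k)^2)"
proof -
  have "0 \<le> (\<Sum>k\<in>S. a k * (y k - (\<Sum>l\<in>S. a l * y l))^2)"
    by (rule sum_nonneg) (simp add: assms)
  then show ?thesis using var_id[OF assms(1,2), of y] by simp
qed

lemma center_le:
  fixes z :: "'a \<Rightarrow> real"
  assumes "finite S" "S \<noteq> {}"
  shows "(\<Sum>k\<in>S. (z k - sum z S / real (card S))^2) \<le> (\<Sum>k\<in>S. (z k)^2)"
proof -
  define m where "m = sum z S / real (card S)"
  have c: "real (card S) > 0" using assms by auto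
  have sz: "sum z S = real (card S) * m" using c by (simp add: m_def)
  have "(\<Sum>k\<in>S. (z k - m)^2) = (\<Sum>k\<in>S. (z k)^2 - 2 * m * z k + m^2)"
    by (rule sum.cong) (simp_all add: power2_diff)
  also have "\<dots> = (\<Sum>k\<in>S. (z k)^2) - 2 * m * sum z S + real (card S) * m^2"
    by (simp only: sum.distrib sum_subtractf sum_distrib_left[symmetric] sum_constant)
  also have "\<dots> = (\<Sum>k\<in>S. (z k)^2) - real (card S) * m^2"
    unfolding sz by (simp add: power2_eq_square algebra_simps)
  also have "\<dots> \<le> (\<Sum>k\<in>S. (z k)^2)" using c by simp
  finally show ?thesis unfolding m_def .
qed

lemma HC_le: "norm (HC (Z::real^'d^'n)) \<le> norm Z"
proof -
  have col: "(\<Sum>i\<in>UNIV. (HC Z $ i $ j)^2) \<le> (\<Sum>i\<in>UNIV. (Z $ i $ j)^2)" for j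
    unfolding HC_entry using center_le[of "UNIV::'n set" "\<lambda>k. Z$k$j"] by simp
  have "(norm (HC Z))^2 = (\<Sum>j\<in>UNIV. \<Sum>i\<in>UNIV. (HC Z $ i $ j)^2)"
    unfolding norm_sq_rows norm_sq_vec by (rule sum.swap)
  also have "\<dots> \<le> (\<Sum>j\<in>UNIV. \<Sum>i\<in>UNIV. (Z $ i $ j)^2)" by (rule sum_mono[OF col])
  also have "\<dots> = (norm Z)^2"
    unfolding norm_sq_rows norm_sq_vec by (rule sum.swap)
  finally have "(norm (HC Z))^2 \<le> (norm Z)^2" .
  then show ?thesis by (rule power2_le_imp_le) auto
qed

lemma vm_inner: "inner (x v* W) v = inner x (W *v v)" for x :: "real^'d" and v :: "real^'e" and W :: "real^'e^'d"
proof -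
  have "inner (x v* W) v = (\<Sum>j\<in>UNIV. (x v* W)$j * v$j)" by (simp add: inner_vec_def)
  also have "\<dots> = (\<Sum>j\<in>UNIV. (\<Sum>i\<in>UNIV. x$i * W$i$j) * v$j)"
    by (simp add: vector_matrix_mult_def)
  also have "\<dots> = (\<Sum>j\<in>UNIV. \<Sum>i\<in>UNIV. x$i * W$i$j * v$j)"
    by (simp only: sum_distrib_right)
  also have "\<dots> = (\<Sum>i\<in>UNIV. \<Sum>j\<in>UNIV. x$i * W$i$j * v$j)" by (rule sum.swap)
  also have "\<dots> = (\<Sum>i\<in>UNIV. x$i * (\<Sum>j\<in>UNIV. W$i$j * v$j))"
    by (simp only: sum_distrib_left mult.assoc)
  also have "\<dots> = inner x (W *v v)"
    by (simp add: matrix_vector_mult_def inner_vec_def)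
  finally show ?thesis .
qed

lemma row_bound: "norm (x v* W) \<le> norm x * spec_norm W" for x :: "real^'d" and W :: "real^'e^'d"
proof -
  define v where "v = x v* W"
  have bl: "bounded_linear (\<lambda>y. W *v y)" by simp
  have s0: "0 \<le> spec_norm W" unfolding spec_norm_def by (rule onorm_pos_le[OF bl])
  have "(norm v)^2 = inner x (W *v v)" by (simp add: v_def vm_inner[symmetric] power2_norm_eq_inner)
  also have "\<dots> \<le> norm x * norm (W *v v)" by (rule norm_cauchy_schwarz)
  also have "\<dots> \<le> norm x * (spec_norm W * norm v)"
    unfolding spec_norm_def by (rule mult_left_mono[OF onorm[OF bl]]) simp
  finally have h: "(norm v)^2 \<le> (norm x * spec_norm W) * norm v" by (simp add: algebra_simps)
  show ?thesis
  proof (cases "norm v = 0")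
    case True then show ?thesis using s0 by (simp add: v_def)
  next
    case False
    then have "norm v > 0" by simp
    with h show ?thesis unfolding v_def[symmetric] by (simp add: power2_eq_square)
  qed
qed

lemma mul_bound: "norm (Z ** W) \<le> norm Z * spec_norm W" for Z :: "real^'d^'n" and W :: "real^'e^'d"
proof -
  have bl: "bounded_linear (\<lambda>y. W *v y)" by simp
  have s0: "0 \<le> spec_norm W" unfolding spec_norm_def by (rule onorm_pos_le[OF bl])
  have rows: "(Z ** W) $ i = Z $ i v* W" for i
    by (simp add: vec_eq_iff matrix_matrix_mult_def vector_matrix_mult_def mult.commute)
  have "(norm (Z ** W))^2 = (\<Sum>i\<in>UNIV. (norm (Z $ i v* W))^2)" by (simp add: norm_sq_rows rows)
  also have "\<dots> \<le> (\<Sum>i\<in>UNIV. (norm (Z $ i) * spec_norm W)^2)"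
    by (intro sum_mono power_mono row_bound norm_ge_zero)
  also have "\<dots> = (norm Z * spec_norm W)^2"
    unfolding norm_sq_rows[of Z] power_mult_distrib sum_distrib_right ..
  finally have "(norm (Z ** W))^2 \<le> (norm Z * spec_norm W)^2" .
  then show ?thesis by (rule power2_le_imp_le) (simp add: s0)
qed

lemma HC_add: "HC (A + B) = HC A + HC (B::real^'d^'n)"
  by (simp add: HC_def matrix_add_ldistrib)

lemma HC_sum: "HC (\<Sum>h<(H::nat). F h) = (\<Sum>h<H. HC (F h :: real^'d^'n))"
proof (induction H)
  case 0
  show ?case by (simp add: HC_def matrix_matrix_mult_def vec_eq_iff)
next
  case (Suc H)
  then show ?case by (simp add: HC_add)
qed

lemma HC_mul: "HC (Z ** W) = HC Z ** (W::real^'e^'d)" for Z :: "real^'d^'n"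
  unfolding HC_def by (simp add: matrix_mul_assoc)



lemma frac_alg:
  fixes q E K S :: real
  assumes "0 < q" "q \<le> E" "0 \<le> K" "q + K / E \<le> S"
  shows "q / S \<le> E^2 / (E^2 + K)"
proof -
  have E0: "0 < E" using assms by simp
  have p1: "0 < q + K / E" using assms E0 by (intro add_pos_nonneg) auto
  have "q / S \<le> q / (q + K / E)"
    using assms p1 by (intro divide_left_mono) auto
  also have "\<dots> = q * E / (q * E + K)" using E0 by (simp add: field_simps)
  also have "\<dots> \<le> E^2 / (E^2 + K)"
  proof -
    have "q * E * (E^2 + K) \<le> E^2 * (q * E + K)"
      using assms E0 mult_left_mono[OF assms(2) assms(3)] by (simp add: algebra_simps power2_eq_square)
    moreover have "0 < q * E + K" "0 < E^2 + K" using assms E0 by (auto intro: add_pos_nonneg)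
    ultimately show ?thesis by (simp add: field_simps)
  qed
  finally show ?thesis .
qed

lemma softmax_nonneg: "softmax P $ i $ k \<ge> 0" for P :: "real^'n^'m"
  by (simp add: softmax_def sum_nonneg)

lemma softmax_pos_den: "(\<Sum>t\<in>UNIV. exp (P $ i $ t)) > 0" for P :: "real^'n^'m"
  by (rule sum_pos) auto

lemma softmax_rowsum: "(\<Sum>k\<in>UNIV. softmax P $ i $ k) = 1" for P :: "real^'n^'m"
proof -
  have "(\<Sum>k\<in>UNIV. softmax P $ i $ k) = (\<Sum>k\<in>UNIV. exp (P $ i $ k)) / (\<Sum>t\<in>UNIV. exp (P $ i $ t))"
    by (simp add: softmax_def sum_divide_distrib[symmetric])
  also have "\<dots> = 1" using softmax_pos_den[of P i] by simp
  finally show ?thesis .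
qed

lemma softmax_entry_le:
  fixes P :: "real^'n^'m"
  assumes bnd: "\<And>i j. \<bar>P $ i $ j\<bar> \<le> \<alpha>"
  shows "softmax P $ i $ k \<le> exp (2 * \<alpha>) / (exp (2 * \<alpha>) + real CARD('n) - 1)"
proof -
  define S where "S = (\<Sum>t\<in>UNIV. exp (P $ i $ t))"
  have rem: "S = exp (P $ i $ k) + (\<Sum>t\<in>UNIV - {k}. exp (P $ i $ t))"
    unfolding S_def by (rule sum.remove) auto
  have "(\<Sum>t\<in>UNIV - {k}. exp (- \<alpha>)) \<le> (\<Sum>t\<in>UNIV - {k}. exp (P $ i $ t))"
  proof (rule sum_mono)
    fix t
    have "\<bar>P $ i $ t\<bar> \<le> \<alpha>" by (rule bnd)
    then show "exp (- \<alpha>) \<le> exp (P $ i $ t)" by (simp add: abs_le_iff)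
  qed
  moreover have "(\<Sum>t\<in>(UNIV::'n set) - {k}. exp (- \<alpha>)) = (real CARD('n) - 1) / exp \<alpha>"
    by (simp add: card_Diff_singleton exp_minus divide_inverse of_nat_diff card_ge_0_finite Suc_leI)
  ultimately have Sge: "exp (P $ i $ k) + (real CARD('n) - 1) / exp \<alpha> \<le> S" using rem by linarith
  have qE: "exp (P $ i $ k) \<le> exp \<alpha>" using bnd[of i k] by (simp add: abs_le_iff)
  have K: "0 \<le> real CARD('n) - 1"
    by (simp add: Suc_leI card_ge_0_finite)
  have "exp (P $ i $ k) / S \<le> (exp \<alpha>)^2 / ((exp \<alpha>)^2 + (real CARD('n) - 1))"
    by (rule frac_alg[OF exp_gt_zero qE K Sge])
  then show ?thesis by (simp add: softmax_def S_def exp_double[symmetric] add_diff_eq)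
qed



lemma softmax_colsum:
  fixes P :: "real^'n^'n"
  assumes bnd: "\<And>i j. \<bar>P $ i $ j\<bar> \<le> \<alpha>"
  shows "(\<Sum>i\<in>UNIV. softmax P $ i $ k) \<le> real CARD('n) * exp (2 * \<alpha>) / (exp (2 * \<alpha>) + real CARD('n) - 1)"
proof -
  have "(\<Sum>i\<in>UNIV. softmax P $ i $ k) \<le> (\<Sum>i\<in>(UNIV::'n set). exp (2 * \<alpha>) / (exp (2 * \<alpha>) + real CARD('n) - 1))"
    by (rule sum_mono) (rule softmax_entry_le[OF bnd])
  then show ?thesis by simp
qed

lemma softmax_mul_bound:
  fixes P :: "real^'n^'n" and Y :: "real^'d^'n"
  assumes bnd: "\<And>i j. \<bar>P $ i $ j\<bar> \<le> \<alpha>"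
  shows "norm (softmax P ** Y) \<le> sqrt (real CARD('n) * exp (2 * \<alpha>) / (exp (2 * \<alpha>) + real CARD('n) - 1)) * norm Y"
proof -
  define c where "c = real CARD('n) * exp (2 * \<alpha>) / (exp (2 * \<alpha>) + real CARD('n) - 1)"
  define A where "A = softmax P"
  have cs: "(\<Sum>i\<in>UNIV. A $ i $ k) \<le> c" for k unfolding A_def c_def by (rule softmax_colsum[OF bnd])
  have c0: "0 \<le> c" using cs[of undefined] sum_nonneg[of UNIV "\<lambda>i. A $ i $ undefined"] softmax_nonneg
    unfolding A_def by fastforce
  have "(norm (A ** Y))^2 = (\<Sum>i\<in>UNIV. \<Sum>j\<in>UNIV. (\<Sum>k\<in>UNIV. A$i$k * Y$k$j)^2)"
    unfolding norm_sq_rows norm_sq_vec by (simp add: matrix_matrix_mult_def)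
  also have "\<dots> \<le> (\<Sum>i\<in>UNIV. \<Sum>j\<in>UNIV. \<Sum>k\<in>UNIV. A$i$k * (Y$k$j)^2)"
    unfolding A_def
    by (intro sum_mono cs_weighted) (simp_all add: softmax_rowsum softmax_nonneg)
  also have "\<dots> = (\<Sum>j\<in>UNIV. \<Sum>i\<in>UNIV. \<Sum>k\<in>UNIV. A$i$k * (Y$k$j)^2)" by (rule sum.swap)
  also have "\<dots> = (\<Sum>j\<in>UNIV. \<Sum>k\<in>UNIV. \<Sum>i\<in>UNIV. A$i$k * (Y$k$j)^2)"
    by (rule sum.cong[OF refl], rule sum.swap)
  also have "\<dots> = (\<Sum>j\<in>UNIV. \<Sum>k\<in>UNIV. (\<Sum>i\<in>UNIV. A$i$k) * (Y$k$j)^2)"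
    by (simp only: sum_distrib_right)
  also have "\<dots> \<le> (\<Sum>j\<in>UNIV. \<Sum>k\<in>UNIV. c * (Y$k$j)^2)"
    by (intro sum_mono mult_right_mono cs zero_le_power2)
  also have "\<dots> = c * (\<Sum>j\<in>UNIV. \<Sum>k\<in>UNIV. (Y$k$j)^2)"
    by (simp only: sum_distrib_left)
  also have "\<dots> = c * (norm Y)^2"
    unfolding norm_sq_rows norm_sq_vec by (simp only: sum.swap[of _ "UNIV::'d set"])
  finally have sq: "(norm (A ** Y))^2 \<le> c * (norm Y)^2" .
  have "norm (A ** Y) = sqrt ((norm (A ** Y))^2)" by simp
  also have "\<dots> \<le> sqrt (c * (norm Y)^2)" using sq by (rule real_sqrt_le_mono)
  also have "\<dots> = sqrt c * norm Y" by (simp add: real_sqrt_mult)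
  finally show ?thesis unfolding A_def c_def .
qed

lemma HC_A_center:
  fixes P :: "real^'n^'n" and X :: "real^'d^'n"
  shows "HC (softmax P ** X) = HC (softmax P ** HC X)"
proof -
  define A where "A = softmax P"
  define m where "m j = (\<Sum>k\<in>UNIV. X$k$j) / real CARD('n)" for j
  have rs: "(\<Sum>k\<in>UNIV. A$i$k) = 1" for i unfolding A_def by (rule softmax_rowsum)
  have e: "(A ** HC X) $ i $ j = (A ** X) $ i $ j - m j" for i j
  proof -
    have "(A ** HC X) $ i $ j = (\<Sum>k\<in>UNIV. A$i$k * X$k$j - A$i$k * m j)"
      by (simp add: matrix_matrix_mult_def HC_entry m_def right_diff_distrib)
    also have "\<dots> = (A ** X) $ i $ j - (\<Sum>k\<in>UNIV. A$i$k) * m j"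
      by (simp add: sum_subtractf sum_distrib_right matrix_matrix_mult_def)
    finally show ?thesis using rs by simp
  qed
  have "HC (A ** HC X) $ i $ j = HC (A ** X) $ i $ j" for i j
  proof -
    have "(\<Sum>k\<in>UNIV. (A ** HC X) $ k $ j) = (\<Sum>k\<in>UNIV. (A ** X) $ k $ j) - real CARD('n) * m j"
      unfolding e by (simp add: sum_subtractf)
    then show ?thesis unfolding HC_entry e by (simp add: diff_divide_distrib)
  qed
  then show ?thesis unfolding A_def by (simp add: vec_eq_iff)
qed



theorem proposition5:
  fixes H :: nat
    and P :: "nat \<Rightarrow> real^'n^'n"
    and WV WO :: "nat \<Rightarrow> real^'d^'d"
    and X :: "real^'d^'n"
    and \<alpha> \<sigma>1 \<sigma>2 :: real
  assumes "H \<ge> 1"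
    and "\<alpha> = Max {\<bar>P h $ i $ j\<bar> | h i j. h < H}"
    and "\<sigma>1 = Max {spec_norm (WV h) | h. h < H}"
    and "\<sigma>2 = Max {spec_norm (WO h) | h. h < H}"
  shows "frob_norm (HC (MSA H P WV WO X + X))
         \<le> (1 + \<sigma>1 * \<sigma>2 * real H *
              sqrt (real CARD('n) * exp (2 * \<alpha>) / (exp (2 * \<alpha>) + real CARD('n) - 1)))
           * frob_norm (HC X)"
proof -
  define s where "s = sqrt (real CARD('n) * exp (2 * \<alpha>) / (exp (2 * \<alpha>) + real CARD('n) - 1))"
  have fin1: "finite {\<bar>P h $ i $ j\<bar> | h i j. h < H}"
  proof -
    have "{\<bar>P h $ i $ j\<bar> | h i j. h < H} = (\<lambda>(h,i,j). \<bar>P h $ i $ j\<bar>) ` ({..<H} \<times> UNIV \<times> UNIV)"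
      by (auto simp: image_iff) (metis UNIV_I lessThan_iff mem_Sigma_iff old.prod.case)
    then show ?thesis by simp
  qed
  have fin2: "finite {spec_norm (W h) | h. h < H}" for W :: "nat \<Rightarrow> real^'d^'d"
  proof -
    have "{spec_norm (W h) | h. h < H} = (\<lambda>h. spec_norm (W h)) ` {..<H}" by auto
    then show ?thesis by simp
  qed
  have bnd: "\<bar>P h $ i $ j\<bar> \<le> \<alpha>" if "h < H" for h i j
    unfolding assms(2) by (rule Max_ge[OF fin1]) (use that in blast)
  have sn0: "0 \<le> spec_norm W" for W :: "real^'d^'d"
    unfolding spec_norm_def by (rule onorm_pos_le) simp
  have s1: "spec_norm (WV h) \<le> \<sigma>1" if "h < H" for h
    unfolding assms(3) by (rule Max_ge[OF fin2]) (use that in blast)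
  have s2: "spec_norm (WO h) \<le> \<sigma>2" if "h < H" for h
    unfolding assms(4) by (rule Max_ge[OF fin2]) (use that in blast)
  have c1: "1 \<le> real CARD('n)" using zero_less_card_finite[where 'a='n] by linarith
  have d0: "0 \<le> exp (2 * \<alpha>) + real CARD('n) - 1" using c1 exp_gt_zero[of "2 * \<alpha>"] by linarith
  have s0: "0 \<le> s" unfolding s_def
    using c1 d0 by (intro real_sqrt_ge_zero divide_nonneg_nonneg mult_nonneg_nonneg) auto
  have n0: "0 \<le> norm (HC X)" by simp
  have hterm: "norm (HC (softmax (P h) ** X ** WV h ** WO h)) \<le> \<sigma>1 * \<sigma>2 * s * norm (HC X)"
    if h: "h < H" for h
  proof -
    have a: "norm (HC (softmax (P h) ** X)) \<le> s * norm (HC X)"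
    proof -
      have "norm (HC (softmax (P h) ** X)) = norm (HC (softmax (P h) ** HC X))"
        using HC_A_center[of "P h" X] by (rule arg_cong)
      also have "\<dots> \<le> norm (softmax (P h) ** HC X)" by (rule HC_le)
      also have "\<dots> \<le> s * norm (HC X)" unfolding s_def
        by (rule softmax_mul_bound) (rule bnd[OF h])
      finally show ?thesis .
    qed
    have sn: "0 \<le> s * norm (HC X)" by (rule mult_nonneg_nonneg[OF s0 n0])
    have g1: "0 \<le> \<sigma>1" by (rule order_trans[OF sn0 s1[OF h]])
    have i1: "norm (HC (softmax (P h) ** X)) * spec_norm (WV h) \<le> s * norm (HC X) * \<sigma>1"
      by (rule mult_mono[OF a s1[OF h] sn sn0])
    have "norm (HC (softmax (P h) ** X ** WV h ** WO h))
        = norm (HC (softmax (P h) ** X) ** WV h ** WO h)" by (simp only: HC_mul)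
    also have "\<dots> \<le> norm (HC (softmax (P h) ** X) ** WV h) * spec_norm (WO h)" by (rule mul_bound)
    also have "\<dots> \<le> (norm (HC (softmax (P h) ** X)) * spec_norm (WV h)) * spec_norm (WO h)"
      by (rule mult_right_mono[OF mul_bound sn0])
    also have "\<dots> \<le> (s * norm (HC X) * \<sigma>1) * \<sigma>2"
      by (rule mult_mono[OF i1 s2[OF h] mult_nonneg_nonneg[OF sn g1] sn0])
    also have "\<dots> = \<sigma>1 * \<sigma>2 * s * norm (HC X)" by (simp only: mult_ac)
    finally show ?thesis .
  qed
  have "frob_norm (HC (MSA H P WV WO X + X)) = norm (HC (MSA H P WV WO X) + HC X)"
    by (simp add: frob_eq HC_add)
  also have "\<dots> \<le> norm (HC (MSA H P WV WO X)) + norm (HC X)" by (rule norm_triangle_ineq)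
  also have "norm (HC (MSA H P WV WO X)) \<le> (\<Sum>h<H. norm (HC (softmax (P h) ** X ** WV h ** WO h)))"
    unfolding MSA_def HC_sum by (rule norm_sum)
  also have "\<dots> \<le> (\<Sum>h<H. \<sigma>1 * \<sigma>2 * s * norm (HC X))"
    by (rule sum_mono) (rule hterm, simp)
  also have "(\<Sum>h<H. \<sigma>1 * \<sigma>2 * s * norm (HC X)) + norm (HC X)
      = (1 + \<sigma>1 * \<sigma>2 * real H * s) * frob_norm (HC X)"
    by (simp add: frob_eq algebra_simps)
  finally show ?thesis unfolding s_def by simp
qed


end
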